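(* Let $(\Omega,\mathcal F,P)$ be a probability space and let $\mathcal F_1,\mathcal F_2\subset\mathcal F$ be sub-$\sigma$-fields. - (a) If $C_1\subset C_2$ are measurable and $\mathcal F_1,\mathcal F_2$ are a nonsingular pair within $C_2$, then they are a nonsingular pair within $C_1$. - (b) If $C_1,C_2,\dots$ are pairwise disjoint measurable sets with union $C$, and $\mathcal F_1,\mathcal F_2$ are a nonsingular pair within each $C_k$, then they are a nonsingular pair within $C$. - (c) Let $C$ be measurable and let $\mathcal E_1\subset\mathcal F$ be a sub-$\sigma$-field such that for every $E\in\mathcal E_1$ there exists $A\in\mathcal F_1$ with $A\cap C=E\cap C$. If $\mathcal F_1,\mathcal F_2$ are a nonsingular pair within $C$, then $\mathcal E_1,\mathcal F_2$ are a nonsingular pair within $C$.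
   Context: Let $(\Omega,\mathcal F,P)$ be a probability space and $C\in\mathcal F$. Two sub-$\sigma$-fields $\mathcal F_1,\mathcal F_2\subset\mathcal F$ are a nonsingular pair within $C$ if there exists a measurable function $f:\Omega\times\Omega\to[0,\infty)$ such that $P(A\cap B\cap C)=\int_{A\times B} f(\omega_1,\omega_2)\,P(d\omega_1)P(d\omega_2)$ for all $A\in\mathcal F_1$, $B\in\mathcal F_2$. Equivalently, there exists a measurable $g:C\times C\to[0,\infty)$ with $P(A\cap B\cap C)=\int_{(A\cap C)\times(B\cap C)} g\,dP\,dP$ for all such $A,B$. *)

theory Defs
  imports "HOL-Probability.Probability"
begin

definition nonsingular_pair_within :: "'a measure \<Rightarrow> 'a measure \<Rightarrow> 'a measure \<Rightarrow> 'a set \<Rightarrow> bool" where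
  "nonsingular_pair_within M F1 F2 C \<longleftrightarrow>
     (\<exists>f \<in> borel_measurable (M \<Otimes>\<^sub>M M).
        (\<forall>w \<in> space (M \<Otimes>\<^sub>M M). 0 \<le> f w) \<and>
        (\<forall>A \<in> sets F1. \<forall>B \<in> sets F2.
           emeasure M (A \<inter> B \<inter> C) = (\<integral>\<^sup>+ w \<in> A \<times> B. ennreal (f w) \<partial>(M \<Otimes>\<^sub>M M))))"

end

theory Submission
  imports Defs
begin

definition nuC :: "'a measure \<Rightarrow> 'a measure \<Rightarrow> 'a measure \<Rightarrow> 'a set \<Rightarrow> ('a \<times> 'a) measure" where
  "nuC M F1 F2 C = distr (density M (indicator C :: 'a \<Rightarrow> ennreal)) (F1 \<Otimes>\<^sub>M F2) (\<lambda>w. (w, w))"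

definition Rm :: "'a measure \<Rightarrow> 'a measure \<Rightarrow> 'a measure \<Rightarrow> ('a \<times> 'a) measure" where
  "Rm M F1 F2 = distr (M \<Otimes>\<^sub>M M) (F1 \<Otimes>\<^sub>M F2) (\<lambda>x. x)"

lemma prod_measure_eq:
  assumes "sets N1 = sets (F1 \<Otimes>\<^sub>M F2)" "sets N2 = sets (F1 \<Otimes>\<^sub>M F2)"
    and "\<And>A B. A \<in> sets F1 \<Longrightarrow> B \<in> sets F2 \<Longrightarrow> emeasure N1 (A \<times> B) = emeasure N2 (A \<times> B)"
    and "emeasure N1 (space F1 \<times> space F2) \<noteq> \<infinity>"
  shows "N1 = N2"
  by (rule measure_eqI_generator_eq[OF Int_stable_pair_measure_generator[of F1 F2],
        where \<Omega> = "space F1 \<times> space F2" and A = "\<lambda>_. space F1 \<times> space F2"])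
     (use assms in \<open>auto simp: sets_pair_measure dest: sets.sets_into_space\<close>)

context
  fixes M F1 F2 :: "'a measure"
  assumes P: "prob_space M" and s1: "subalgebra M F1" and s2: "subalgebra M F2"
begin

lemma sp1: "space F1 = space M" using s1 by (simp add: subalgebra_def)
lemma sp2: "space F2 = space M" using s2 by (simp add: subalgebra_def)

lemma id1: "(\<lambda>x. x) \<in> measurable M F1"
  using s1 by (auto simp: measurable_def subalgebra_def dest: sets.sets_into_space)
lemma id2: "(\<lambda>x. x) \<in> measurable M F2"
  using s2 by (auto simp: measurable_def subalgebra_def dest: sets.sets_into_space)

lemma diag_meas: "(\<lambda>w. (w, w)) \<in> measurable M (F1 \<Otimes>\<^sub>M F2)"
  by (rule measurable_Pair[OF id1 id2])

lemma id_meas: "(\<lambda>x. x) \<in> measurable (M \<Otimes>\<^sub>M M) (F1 \<Otimes>\<^sub>M F2)"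
proof -
  have "(\<lambda>x. (fst x, snd x)) \<in> measurable (M \<Otimes>\<^sub>M M) (F1 \<Otimes>\<^sub>M F2)"
    by (rule measurable_Pair[OF measurable_compose[OF measurable_fst id1] measurable_compose[OF measurable_snd id2]])
  then show ?thesis by simp
qed

lemma space_eq: "space (F1 \<Otimes>\<^sub>M F2) = space (M \<Otimes>\<^sub>M M)"
  by (simp add: space_pair_measure sp1 sp2)

lemma sets_sub: "sets (F1 \<Otimes>\<^sub>M F2) \<subseteq> sets (M \<Otimes>\<^sub>M M)"
proof
  fix S assume S: "S \<in> sets (F1 \<Otimes>\<^sub>M F2)"
  have "(\<lambda>x. x) -` S \<inter> space (M \<Otimes>\<^sub>M M) \<in> sets (M \<Otimes>\<^sub>M M)"
    using measurable_sets[OF id_meas S] .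
  moreover have "S \<subseteq> space (M \<Otimes>\<^sub>M M)" using sets.sets_into_space[OF S] space_eq by simp
  ultimately show "S \<in> sets (M \<Otimes>\<^sub>M M)" by (simp add: Int_absorb2)
qed

lemma Rm_emeasure: "S \<in> sets (F1 \<Otimes>\<^sub>M F2) \<Longrightarrow> emeasure (Rm M F1 F2) S = emeasure (M \<Otimes>\<^sub>M M) S"
  unfolding Rm_def
  by (subst emeasure_distr[OF id_meas]) (auto simp: Int_absorb2 dest: sets.sets_into_space simp: space_eq[symmetric])

lemma diag_sets:
  assumes S: "S \<in> sets (F1 \<Otimes>\<^sub>M F2)"
  shows "{w \<in> space M. (w, w) \<in> S} \<in> sets M"
proof -
  have pre: "(\<lambda>w. (w, w)) -` S \<inter> space M = {w \<in> space M. (w, w) \<in> S}" by auto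
  show ?thesis using measurable_sets[OF diag_meas S] pre by simp
qed

lemma nuC_emeasure:
  assumes C: "C \<in> sets M" and S: "S \<in> sets (F1 \<Otimes>\<^sub>M F2)"
  shows "emeasure (nuC M F1 F2 C) S = emeasure M ({w \<in> space M. (w, w) \<in> S} \<inter> C)"
proof -
  have m: "(\<lambda>w. (w, w)) \<in> measurable (density M (indicator C :: 'a \<Rightarrow> ennreal)) (F1 \<Otimes>\<^sub>M F2)"
    using diag_meas by (simp cong: measurable_cong_sets)
  have pre: "(\<lambda>w. (w, w)) -` S \<inter> space M = {w \<in> space M. (w, w) \<in> S}" by auto
  have pre2: "space M \<inter> (\<lambda>w. (w, w)) -` S = {w \<in> space M. (w, w) \<in> S}" by auto
  have ps: "{w \<in> space M. (w, w) \<in> S} \<in> sets M"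
    using measurable_sets[OF diag_meas S] pre by simp
  show ?thesis unfolding nuC_def
    by (subst emeasure_distr[OF m S]) (simp add: pre2 emeasure_restricted[OF C ps] Int_commute)
qed

lemma nuC_rect:
  assumes C: "C \<in> sets M" and A: "A \<in> sets F1" and B: "B \<in> sets F2"
  shows "emeasure (nuC M F1 F2 C) (A \<times> B) = emeasure M (A \<inter> B \<inter> C)"
proof -
  have "A \<subseteq> space M" using sets.sets_into_space[OF A] sp1 by simp
  then have "{w \<in> space M. (w, w) \<in> A \<times> B} \<inter> C = A \<inter> B \<inter> C" by auto
  then show ?thesis using nuC_emeasure[OF C] A B by simp
qed

lemma nuC_finite:
  assumes C: "C \<in> sets M"
  shows "emeasure (nuC M F1 F2 C) X \<noteq> \<infinity>"
proof -
  interpret prob_space M by (rule P)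
  have "emeasure (nuC M F1 F2 C) X \<le> emeasure (nuC M F1 F2 C) (space (nuC M F1 F2 C))"
    by (rule emeasure_space)
  also have "\<dots> = emeasure M ({w \<in> space M. (w, w) \<in> space (F1 \<Otimes>\<^sub>M F2)} \<inter> C)"
    by (simp add: nuC_def nuC_emeasure[OF C, unfolded nuC_def])
  also have "\<dots> < \<infinity>" using emeasure_finite by (simp add: less_top[symmetric])
  finally show ?thesis by simp
qed

lemma sets_nuC: "sets (nuC M F1 F2 C) = sets (F1 \<Otimes>\<^sub>M F2)" by (simp add: nuC_def)
lemma sets_Rm: "sets (Rm M F1 F2) = sets (F1 \<Otimes>\<^sub>M F2)" by (simp add: Rm_def)

lemma nsp_imp_ac:
  assumes C: "C \<in> sets M" and N: "nonsingular_pair_within M F1 F2 C"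
    and S: "S \<in> sets (F1 \<Otimes>\<^sub>M F2)" and S0: "emeasure (M \<Otimes>\<^sub>M M) S = 0"
  shows "emeasure (nuC M F1 F2 C) S = 0"
proof -
  obtain f where fm: "f \<in> borel_measurable (M \<Otimes>\<^sub>M M)" and
    eq: "\<forall>A \<in> sets F1. \<forall>B \<in> sets F2. emeasure M (A \<inter> B \<inter> C) = (\<integral>\<^sup>+ w \<in> A \<times> B. ennreal (f w) \<partial>(M \<Otimes>\<^sub>M M))"
    using N unfolding nonsingular_pair_within_def by blast
  let ?D = "density (M \<Otimes>\<^sub>M M) (\<lambda>w. ennreal (f w))"
  let ?N2 = "distr ?D (F1 \<Otimes>\<^sub>M F2) (\<lambda>x. x)"
  have fm': "(\<lambda>w. ennreal (f w)) \<in> borel_measurable (M \<Otimes>\<^sub>M M)" using fm by measurable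
  have idm: "(\<lambda>x. x) \<in> measurable ?D (F1 \<Otimes>\<^sub>M F2)"
    using id_meas by (simp cong: measurable_cong_sets)
  have em2: "emeasure ?N2 T = (\<integral>\<^sup>+ w \<in> T. ennreal (f w) \<partial>(M \<Otimes>\<^sub>M M))" if T: "T \<in> sets (F1 \<Otimes>\<^sub>M F2)" for T
  proof -
    have TQ: "T \<in> sets (M \<Otimes>\<^sub>M M)" using T sets_sub by blast
    have "(\<lambda>x. x) -` T \<inter> space ?D = T" using sets.sets_into_space[OF TQ] by auto
    then show ?thesis
      using emeasure_density[OF fm' TQ] by (simp add: emeasure_distr[OF idm T])
  qed
  have "nuC M F1 F2 C = ?N2"
  proof (rule prod_measure_eq)
    show "sets (nuC M F1 F2 C) = sets (F1 \<Otimes>\<^sub>M F2)" by (rule sets_nuC)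
    show "sets ?N2 = sets (F1 \<Otimes>\<^sub>M F2)" by simp
    show "emeasure (nuC M F1 F2 C) (A \<times> B) = emeasure ?N2 (A \<times> B)" if "A \<in> sets F1" "B \<in> sets F2" for A B
      using that nuC_rect[OF C that] em2[of "A \<times> B"] eq by auto
    show "emeasure (nuC M F1 F2 C) (space F1 \<times> space F2) \<noteq> \<infinity>" by (rule nuC_finite[OF C])
  qed
  then have "emeasure (nuC M F1 F2 C) S = (\<integral>\<^sup>+ w \<in> S. ennreal (f w) \<partial>(M \<Otimes>\<^sub>M M))"
    using em2[OF S] by simp
  also have "\<dots> = 0"
    by (rule nn_integral_null_set) (use S S0 sets_sub in auto)
  finally show ?thesis .
qed

lemma ac_imp_nsp:
  assumes C: "C \<in> sets M"
    and AC: "\<forall>S \<in> sets (F1 \<Otimes>\<^sub>M F2). emeasure (M \<Otimes>\<^sub>M M) S = 0 \<longrightarrow> emeasure (nuC M F1 F2 C) S = 0"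
  shows "nonsingular_pair_within M F1 F2 C"
proof -
  let ?R = "Rm M F1 F2" and ?N = "nuC M F1 F2 C"
  interpret Q: prob_space "M \<Otimes>\<^sub>M M" by (rule prob_space_pair[OF P P])
  have spR: "space ?R = space (F1 \<Otimes>\<^sub>M F2)" by (simp add: Rm_def)
  have "finite_measure ?R"
  proof (rule finite_measureI)
    have "emeasure ?R (space ?R) = emeasure (M \<Otimes>\<^sub>M M) (space (M \<Otimes>\<^sub>M M))"
      using Rm_emeasure[OF sets.top[of "F1 \<Otimes>\<^sub>M F2"]] spR space_eq by simp
    then show "emeasure ?R (space ?R) \<noteq> \<infinity>" by simp
  qed
  then interpret R: finite_measure ?R .
  have finN: "finite_measure ?N"
    by (rule finite_measureI) (rule nuC_finite[OF C])
  have ac: "absolutely_continuous ?R ?N"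
    unfolding absolutely_continuous_def null_sets_def
    using AC Rm_emeasure by (auto simp: sets_Rm sets_nuC)
  define g where "g = RN_deriv ?R ?N"
  have dens: "density ?R g = ?N" unfolding g_def by (rule R.density_RN_deriv[OF ac sets_nuC[unfolded sets_Rm[symmetric]]])
  have fin: "AE x in ?R. g x \<noteq> \<infinity>" unfolding g_def
    by (rule R.RN_deriv_finite[OF finite_measure.sigma_finite_measure[OF finN] ac sets_nuC[unfolded sets_Rm[symmetric]]])
  have gm: "g \<in> borel_measurable ?R" unfolding g_def by simp
  have gm': "g \<in> borel_measurable (F1 \<Otimes>\<^sub>M F2)" using gm measurable_cong_sets[OF sets_Rm refl] by blast
  have gQ: "g \<in> borel_measurable (M \<Otimes>\<^sub>M M)" using measurable_compose[OF id_meas gm'] by simp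
  show ?thesis unfolding nonsingular_pair_within_def
  proof (intro bexI[of _ "\<lambda>x. enn2real (g x)"] conjI ballI)
    show "(\<lambda>x. enn2real (g x)) \<in> borel_measurable (M \<Otimes>\<^sub>M M)" using gQ by measurable
    show "0 \<le> enn2real (g w)" for w by simp
    fix A B assume A: "A \<in> sets F1" and B: "B \<in> sets F2"
    have AB: "A \<times> B \<in> sets (F1 \<Otimes>\<^sub>M F2)" using A B by simp
    have "emeasure M (A \<inter> B \<inter> C) = emeasure ?N (A \<times> B)" using nuC_rect[OF C A B] by simp
    also have "\<dots> = emeasure (density ?R g) (A \<times> B)" using dens by simp
    also have "\<dots> = (\<integral>\<^sup>+ x. g x * indicator (A \<times> B) x \<partial>?R)"
      by (rule emeasure_density[OF gm]) (simp add: sets_Rm AB)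
    also have "\<dots> = (\<integral>\<^sup>+ x. ennreal (enn2real (g x)) * indicator (A \<times> B) x \<partial>?R)"
      by (rule nn_integral_cong_AE) (use fin in \<open>auto simp: ennreal_enn2real_if\<close>)
    also have "\<dots> = (\<integral>\<^sup>+ x. ennreal (enn2real (g x)) * indicator (A \<times> B) x \<partial>(M \<Otimes>\<^sub>M M))"
      unfolding Rm_def
      by (rule nn_integral_distr[OF id_meas]) (use gm' AB in \<open>simp cong: measurable_cong_sets\<close>)
    finally show "emeasure M (A \<inter> B \<inter> C) = (\<integral>\<^sup>+ w \<in> A \<times> B. ennreal (enn2real (g w)) \<partial>(M \<Otimes>\<^sub>M M))" .
  qed
qed

lemma dens_restr:
  assumes u: "u \<in> borel_measurable (M \<Otimes>\<^sub>M M)" and T: "T \<in> sets (F1 \<Otimes>\<^sub>M F2)"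
  shows "emeasure (distr (density (M \<Otimes>\<^sub>M M) u) (F1 \<Otimes>\<^sub>M F2) (\<lambda>x. x)) T = (\<integral>\<^sup>+ w \<in> T. u w \<partial>(M \<Otimes>\<^sub>M M))"
proof -
  have idm: "(\<lambda>x. x) \<in> measurable (density (M \<Otimes>\<^sub>M M) u) (F1 \<Otimes>\<^sub>M F2)"
    using id_meas by (simp cong: measurable_cong_sets)
  have TQ: "T \<in> sets (M \<Otimes>\<^sub>M M)" using T sets_sub by blast
  have "(\<lambda>x. x) -` T \<inter> space (density (M \<Otimes>\<^sub>M M) u) = T" using sets.sets_into_space[OF TQ] by auto
  then show ?thesis
    using emeasure_density[OF u TQ] by (simp add: emeasure_distr[OF idm T])
qed

lemma support_lemma:
  assumes C: "C \<in> sets M" and N: "nonsingular_pair_within M F1 F2 C"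
    and S: "S \<in> sets (F1 \<Otimes>\<^sub>M F2)" and S0: "emeasure (M \<Otimes>\<^sub>M M) (S \<inter> (C \<times> C)) = 0"
  shows "emeasure (nuC M F1 F2 C) S = 0"
proof -
  interpret P: prob_space M by (rule P)
  interpret Q: prob_space "M \<Otimes>\<^sub>M M" by (rule prob_space_pair[OF P P])
  interpret c1: finite_measure_subalgebra M F1
    by (simp add: finite_measure_subalgebra_def finite_measure_subalgebra_axioms_def P.finite_measure_axioms s1)
  interpret c2: finite_measure_subalgebra M F2
    by (simp add: finite_measure_subalgebra_def finite_measure_subalgebra_axioms_def P.finite_measure_axioms s2)
  define p1 where "p1 = nn_cond_exp M F1 (indicator C)"
  define p2 where "p2 = nn_cond_exp M F2 (indicator C)"
  have p1m[measurable]: "p1 \<in> borel_measurable F1" "p1 \<in> borel_measurable M" unfolding p1_def by simp_all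
  have p2m[measurable]: "p2 \<in> borel_measurable F2" "p2 \<in> borel_measurable M" unfolding p2_def by simp_all
  have Cm[measurable]: "C \<in> sets M" by (rule C)
  have int1: "(\<integral>\<^sup>+ x. indicator A x * p1 x \<partial>M) = emeasure M (A \<inter> C)" if A: "A \<in> sets F1" for A
  proof -
    have "(\<integral>\<^sup>+ x. indicator A x * p1 x \<partial>M) = (\<integral>\<^sup>+ x. indicator A x * indicator C x \<partial>M)"
      unfolding p1_def by (rule c1.nn_cond_exp_intg) (use A in simp_all)
    also have "\<dots> = (\<integral>\<^sup>+ x. indicator (A \<inter> C) x \<partial>M)"
      by (simp add: indicator_inter_arith)
    also have "\<dots> = emeasure M (A \<inter> C)"
      using A s1 C by (intro nn_integral_indicator) (auto simp: subalgebra_def)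
    finally show ?thesis .
  qed
  have int2: "(\<integral>\<^sup>+ x. indicator B x * p2 x \<partial>M) = emeasure M (B \<inter> C)" if B: "B \<in> sets F2" for B
  proof -
    have "(\<integral>\<^sup>+ x. indicator B x * p2 x \<partial>M) = (\<integral>\<^sup>+ x. indicator B x * indicator C x \<partial>M)"
      unfolding p2_def by (rule c2.nn_cond_exp_intg) (use B in simp_all)
    also have "\<dots> = (\<integral>\<^sup>+ x. indicator (B \<inter> C) x \<partial>M)"
      by (simp add: indicator_inter_arith)
    also have "\<dots> = emeasure M (B \<inter> C)"
      using B s2 C by (intro nn_integral_indicator) (auto simp: subalgebra_def)
    finally show ?thesis .
  qed
  define h where "h x = p1 (fst x) * p2 (snd x)" for x
  have hm[measurable]: "h \<in> borel_measurable (M \<Otimes>\<^sub>M M)" unfolding h_def by measurable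
  have CCm[measurable]: "C \<times> C \<in> sets (M \<Otimes>\<^sub>M M)" by simp
  have im: "(indicator (C \<times> C) :: 'a \<times> 'a \<Rightarrow> ennreal) \<in> borel_measurable (M \<Otimes>\<^sub>M M)" by measurable
  let ?L1 = "distr (density (M \<Otimes>\<^sub>M M) (indicator (C \<times> C))) (F1 \<Otimes>\<^sub>M F2) (\<lambda>x. x)"
  let ?L2 = "distr (density (M \<Otimes>\<^sub>M M) h) (F1 \<Otimes>\<^sub>M F2) (\<lambda>x. x)"
  have L1: "emeasure ?L1 T = emeasure (M \<Otimes>\<^sub>M M) (T \<inter> (C \<times> C))" if T: "T \<in> sets (F1 \<Otimes>\<^sub>M F2)" for T
  proof -
    have TQ: "T \<in> sets (M \<Otimes>\<^sub>M M)" using T sets_sub by blast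
    have "emeasure ?L1 T = (\<integral>\<^sup>+ w. indicator (T \<inter> (C \<times> C)) w \<partial>(M \<Otimes>\<^sub>M M))"
      using dens_restr[OF im T] by (simp add: indicator_inter_arith mult.commute)
    also have "\<dots> = emeasure (M \<Otimes>\<^sub>M M) (T \<inter> (C \<times> C))" using TQ by simp
    finally show ?thesis .
  qed
  have "?L1 = ?L2"
  proof (rule prod_measure_eq)
    show "sets ?L1 = sets (F1 \<Otimes>\<^sub>M F2)" by simp
    show "sets ?L2 = sets (F1 \<Otimes>\<^sub>M F2)" by simp
    show "emeasure ?L1 (space F1 \<times> space F2) \<noteq> \<infinity>"
      using L1[OF sets.top[of "F1 \<Otimes>\<^sub>M F2"]] by (simp add: space_pair_measure)
    fix A B assume A: "A \<in> sets F1" and B: "B \<in> sets F2"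
    have AM: "A \<in> sets M" using A s1 by (auto simp: subalgebra_def)
    have BM: "B \<in> sets M" using B s2 by (auto simp: subalgebra_def)
    have AB: "A \<times> B \<in> sets (F1 \<Otimes>\<^sub>M F2)" using A B by simp
    have "emeasure ?L1 (A \<times> B) = emeasure (M \<Otimes>\<^sub>M M) ((A \<inter> C) \<times> (B \<inter> C))"
      using L1[OF AB] by (simp add: Times_Int_Times)
    also have "\<dots> = emeasure M (A \<inter> C) * emeasure M (B \<inter> C)"
      by (rule P.emeasure_pair_measure_Times) (use AM BM C in auto)
    finally have e1: "emeasure ?L1 (A \<times> B) = emeasure M (A \<inter> C) * emeasure M (B \<inter> C)" .
    have "emeasure ?L2 (A \<times> B) = (\<integral>\<^sup>+ w. h w * indicator (A \<times> B) w \<partial>(M \<Otimes>\<^sub>M M))"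
      using dens_restr[OF hm AB] by simp
    also have "\<dots> = (\<integral>\<^sup>+ w. (indicator A (fst w) * p1 (fst w)) * (indicator B (snd w) * p2 (snd w)) \<partial>(M \<Otimes>\<^sub>M M))"
      by (rule nn_integral_cong) (auto simp: h_def split: split_indicator)
    also have "\<dots> = (\<integral>\<^sup>+ x. \<integral>\<^sup>+ y. (indicator A x * p1 x) * (indicator B y * p2 y) \<partial>M \<partial>M)"
    proof -
      have mm: "(\<lambda>w. (indicator A (fst w) * p1 (fst w)) * (indicator B (snd w) * p2 (snd w)) :: ennreal) \<in> borel_measurable (M \<Otimes>\<^sub>M M)"
        using AM BM by measurable
      show ?thesis using P.nn_integral_fst[OF mm] by simp
    qed
    also have "\<dots> = (\<integral>\<^sup>+ x. (indicator A x * p1 x) * (\<integral>\<^sup>+ y. indicator B y * p2 y \<partial>M) \<partial>M)"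
      by (rule nn_integral_cong) (rule nn_integral_cmult, use BM in measurable)
    also have "\<dots> = (\<integral>\<^sup>+ x. indicator A x * p1 x \<partial>M) * (\<integral>\<^sup>+ y. indicator B y * p2 y \<partial>M)"
      by (rule nn_integral_multc) (use AM in measurable)
    also have "\<dots> = emeasure M (A \<inter> C) * emeasure M (B \<inter> C)" using int1[OF A] int2[OF B] by simp
    finally show "emeasure ?L1 (A \<times> B) = emeasure ?L2 (A \<times> B)" using e1 by simp
  qed
  then have "(\<integral>\<^sup>+ w. h w * indicator S w \<partial>(M \<Otimes>\<^sub>M M)) = 0"
    using L1[OF S] dens_restr[OF hm S] S0 by simp
  then have AE0: "AE w in M \<Otimes>\<^sub>M M. h w * indicator S w = 0"
    using S sets_sub by (subst (asm) nn_integral_0_iff_AE) auto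
  define Z1 where "Z1 = {x \<in> space M. p1 x = 0}"
  define Z2 where "Z2 = {x \<in> space M. p2 x = 0}"
  have Z1: "Z1 \<in> sets F1"
  proof -
    have "{x \<in> space F1. p1 x = 0} \<in> sets F1" by measurable
    then show ?thesis by (simp add: Z1_def sp1)
  qed
  have Z2: "Z2 \<in> sets F2"
  proof -
    have "{x \<in> space F2. p2 x = 0} \<in> sets F2" by measurable
    then show ?thesis by (simp add: Z2_def sp2)
  qed
  define Nn where "Nn = S - (Z1 \<times> space M \<union> space M \<times> Z2)"
  have Z1s: "Z1 \<times> space M \<in> sets (F1 \<Otimes>\<^sub>M F2)" using Z1 sets.top[of F2] sp2 by simp
  have Z2s: "space M \<times> Z2 \<in> sets (F1 \<Otimes>\<^sub>M F2)" using Z2 sets.top[of F1] sp1 by simp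
  have Nns: "Nn \<in> sets (F1 \<Otimes>\<^sub>M F2)" unfolding Nn_def using S Z1s Z2s by auto
  have "emeasure (M \<Otimes>\<^sub>M M) Nn = 0"
  proof -
    have NQ: "Nn \<in> sets (M \<Otimes>\<^sub>M M)" using Nns sets_sub by blast
    have AEN: "AE w in M \<Otimes>\<^sub>M M. w \<notin> Nn"
      using AE0 AE_space by eventually_elim (auto simp: Nn_def Z1_def Z2_def h_def space_pair_measure)
    then show ?thesis
    proof -
      have eqN: "{w \<in> space (M \<Otimes>\<^sub>M M). \<not> w \<notin> Nn} = Nn" using sets.sets_into_space[OF NQ] by blast
      from AE_iff_measurable[OF NQ eqN] AEN show ?thesis by simp
    qed
  qed
  then have n0: "emeasure (nuC M F1 F2 C) Nn = 0" by (rule nsp_imp_ac[OF C N Nns])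
  have n1: "emeasure (nuC M F1 F2 C) (Z1 \<times> space M) = 0"
  proof -
    have "emeasure (nuC M F1 F2 C) (Z1 \<times> space M) = emeasure M (Z1 \<inter> C)"
    proof -
      have "{w \<in> space M. (w, w) \<in> Z1 \<times> space M} \<inter> C = Z1 \<inter> C" by (auto simp: Z1_def)
      then show ?thesis using nuC_emeasure[OF C Z1s] by simp
    qed
    also have "\<dots> = (\<integral>\<^sup>+ x. indicator Z1 x * p1 x \<partial>M)" using int1[OF Z1] by simp
    also have "\<dots> = (\<integral>\<^sup>+ x. 0 \<partial>M)"
      by (rule nn_integral_cong) (auto simp: Z1_def split: split_indicator)
    finally show ?thesis by simp
  qed
  have n2: "emeasure (nuC M F1 F2 C) (space M \<times> Z2) = 0"
  proof -
    have "emeasure (nuC M F1 F2 C) (space M \<times> Z2) = emeasure M (Z2 \<inter> C)"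
    proof -
      have "{w \<in> space M. (w, w) \<in> space M \<times> Z2} \<inter> C = Z2 \<inter> C" by (auto simp: Z2_def)
      then show ?thesis using nuC_emeasure[OF C Z2s] by simp
    qed
    also have "\<dots> = (\<integral>\<^sup>+ x. indicator Z2 x * p2 x \<partial>M)" using int2[OF Z2] by simp
    also have "\<dots> = (\<integral>\<^sup>+ x. 0 \<partial>M)"
      by (rule nn_integral_cong) (auto simp: Z2_def split: split_indicator)
    finally show ?thesis by simp
  qed
  have sub: "S \<subseteq> Nn \<union> (Z1 \<times> space M \<union> space M \<times> Z2)"
    using sets.sets_into_space[OF S] by (auto simp: Nn_def space_pair_measure sp1 sp2)
  have "emeasure (nuC M F1 F2 C) S \<le> emeasure (nuC M F1 F2 C) (Nn \<union> (Z1 \<times> space M \<union> space M \<times> Z2))"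
    by (rule emeasure_mono[OF sub]) (use Nns Z1s Z2s in \<open>auto simp: sets_nuC\<close>)
  also have "\<dots> \<le> emeasure (nuC M F1 F2 C) Nn + emeasure (nuC M F1 F2 C) (Z1 \<times> space M \<union> space M \<times> Z2)"
    by (rule emeasure_subadditive) (use Nns Z1s Z2s in \<open>auto simp: sets_nuC\<close>)
  also have "\<dots> \<le> emeasure (nuC M F1 F2 C) Nn + (emeasure (nuC M F1 F2 C) (Z1 \<times> space M) + emeasure (nuC M F1 F2 C) (space M \<times> Z2))"
    by (intro add_left_mono emeasure_subadditive) (use Z1s Z2s in \<open>auto simp: sets_nuC\<close>)
  also have "\<dots> = 0" using n0 n1 n2 by simp
  finally show ?thesis by simp
qed

lemma trace_lemma:
  assumes E1: "subalgebra M E1" and C: "C \<in> sets M"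
    and tr: "\<forall>E \<in> sets E1. \<exists>A \<in> sets F1. A \<inter> C = E \<inter> C"
    and T: "T \<in> sets (E1 \<Otimes>\<^sub>M F2)"
  shows "\<exists>S \<in> sets (F1 \<Otimes>\<^sub>M F2). T \<inter> (C \<times> C) = S \<inter> (C \<times> C)"
proof -
  have spE: "space E1 = space M" using E1 by (simp add: subalgebra_def)
  have CM: "C \<subseteq> space M" using sets.sets_into_space[OF C] .
  have "T \<in> sigma_sets (space M \<times> space M) {a \<times> b | a b. a \<in> sets E1 \<and> b \<in> sets F2}"
    using T by (simp add: sets_pair_measure spE sp2)
  then show ?thesis
  proof induct
    case (Basic a)
    then obtain E B where a: "a = E \<times> B" and E: "E \<in> sets E1" and B: "B \<in> sets F2" by blast
    obtain A where A: "A \<in> sets F1" and AE: "A \<inter> C = E \<inter> C" using tr E by blast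
    have "a \<inter> (C \<times> C) = (A \<times> B) \<inter> (C \<times> C)" unfolding a Times_Int_Times using AE by simp
    then show ?case using A B by blast
  next
    case Empty
    then show ?case by (intro bexI[of _ "{}"]) auto
  next
    case (Compl a)
    then obtain S where S: "S \<in> sets (F1 \<Otimes>\<^sub>M F2)" and eq: "a \<inter> (C \<times> C) = S \<inter> (C \<times> C)" by blast
    have "(space M \<times> space M - a) \<inter> (C \<times> C) = (space (F1 \<Otimes>\<^sub>M F2) - S) \<inter> (C \<times> C)"
      using eq CM by (auto simp: space_pair_measure sp1 sp2)
    moreover have "space (F1 \<Otimes>\<^sub>M F2) - S \<in> sets (F1 \<Otimes>\<^sub>M F2)" using S by auto
    ultimately show ?case by blast
  next
    case (Union a)
    then have "\<forall>i. \<exists>S \<in> sets (F1 \<Otimes>\<^sub>M F2). a i \<inter> (C \<times> C) = S \<inter> (C \<times> C)" by blast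
    then obtain Sf where Sf: "\<And>i. Sf i \<in> sets (F1 \<Otimes>\<^sub>M F2)" "\<And>i. a i \<inter> (C \<times> C) = Sf i \<inter> (C \<times> C)"
      by metis
    have "(\<Union>i. a i) \<inter> (C \<times> C) = (\<Union>i. Sf i) \<inter> (C \<times> C)" using Sf(2) by blast
    moreover have "(\<Union>i. Sf i) \<in> sets (F1 \<Otimes>\<^sub>M F2)" using Sf(1) by auto
    ultimately show ?case by blast
  qed
qed

end

theorem lemma5p6:
  fixes M F1 F2 :: "'a measure"
  assumes "prob_space M"
    and "subalgebra M F1" and "subalgebra M F2"
  shows "(\<forall>C1 C2. C1 \<in> sets M \<longrightarrow> C2 \<in> sets M \<longrightarrow> C1 \<subseteq> C2 \<longrightarrow>
           nonsingular_pair_within M F1 F2 C2 \<longrightarrow> nonsingular_pair_within M F1 F2 C1) \<and>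
         (\<forall>(Cs :: nat \<Rightarrow> 'a set) C. (\<forall>k. Cs k \<in> sets M) \<longrightarrow> disjoint_family Cs \<longrightarrow>
           C = (\<Union>k. Cs k) \<longrightarrow> (\<forall>k. nonsingular_pair_within M F1 F2 (Cs k)) \<longrightarrow>
           nonsingular_pair_within M F1 F2 C) \<and>
         (\<forall>C E1. C \<in> sets M \<longrightarrow> subalgebra M E1 \<longrightarrow>
           (\<forall>E \<in> sets E1. \<exists>A \<in> sets F1. A \<inter> C = E \<inter> C) \<longrightarrow>
           nonsingular_pair_within M F1 F2 C \<longrightarrow> nonsingular_pair_within M E1 F2 C)"
proof (intro conjI allI impI)
  note P = assms(1) and s1 = assms(2) and s2 = assms(3)
  fix C1 C2 :: "'a set"
  assume C1: "C1 \<in> sets M" and C2: "C2 \<in> sets M" and sub: "C1 \<subseteq> C2"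
    and N: "nonsingular_pair_within M F1 F2 C2"
  show "nonsingular_pair_within M F1 F2 C1"
  proof (rule ac_imp_nsp[OF P s1 s2 C1], intro ballI impI)
    fix S assume S: "S \<in> sets (F1 \<Otimes>\<^sub>M F2)" and S0: "emeasure (M \<Otimes>\<^sub>M M) S = 0"
    have ps: "{w \<in> space M. (w, w) \<in> S} \<in> sets M"
      by (rule diag_sets[OF P s1 s2 S])
    have "emeasure (nuC M F1 F2 C1) S \<le> emeasure (nuC M F1 F2 C2) S"
      unfolding nuC_emeasure[OF P s1 s2 C1 S] nuC_emeasure[OF P s1 s2 C2 S]
      by (rule emeasure_mono) (use sub ps C2 in auto)
    also have "\<dots> = 0" by (rule nsp_imp_ac[OF P s1 s2 C2 N S S0])
    finally show "emeasure (nuC M F1 F2 C1) S = 0" by simp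
  qed
next
  note P = assms(1) and s1 = assms(2) and s2 = assms(3)
  fix Cs :: "nat \<Rightarrow> 'a set" and C
  assume Cs: "\<forall>k. Cs k \<in> sets M" and dj: "disjoint_family Cs" and CU: "C = (\<Union>k. Cs k)"
    and N: "\<forall>k. nonsingular_pair_within M F1 F2 (Cs k)"
  have C: "C \<in> sets M" using Cs CU by auto
  show "nonsingular_pair_within M F1 F2 C"
  proof (rule ac_imp_nsp[OF P s1 s2 C], intro ballI impI)
    fix S assume S: "S \<in> sets (F1 \<Otimes>\<^sub>M F2)" and S0: "emeasure (M \<Otimes>\<^sub>M M) S = 0"
    have ps: "{w \<in> space M. (w, w) \<in> S} \<in> sets M"
      by (rule diag_sets[OF P s1 s2 S])
    have "emeasure M (\<Union>k. {w \<in> space M. (w, w) \<in> S} \<inter> Cs k) = 0"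
    proof (rule emeasure_UN_eq_0)
      show "emeasure M ({w \<in> space M. (w, w) \<in> S} \<inter> Cs k) = 0" for k
        using nsp_imp_ac[OF P s1 s2 _ _ S S0, of "Cs k"] Cs N nuC_emeasure[OF P s1 s2 _ S, of "Cs k"] by simp
      show "range (\<lambda>k. {w \<in> space M. (w, w) \<in> S} \<inter> Cs k) \<subseteq> sets M" using ps Cs by auto
    qed
    moreover have "(\<Union>k. {w \<in> space M. (w, w) \<in> S} \<inter> Cs k) = {w \<in> space M. (w, w) \<in> S} \<inter> C"
      using CU by auto
    ultimately show "emeasure (nuC M F1 F2 C) S = 0"
      using nuC_emeasure[OF P s1 s2 C S] by simp
  qed
next
  note P = assms(1) and s1 = assms(2) and s2 = assms(3)
  fix C E1
  assume C: "C \<in> sets M" and E1: "subalgebra M E1"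
    and tr: "\<forall>E \<in> sets E1. \<exists>A \<in> sets F1. A \<inter> C = E \<inter> C"
    and N: "nonsingular_pair_within M F1 F2 C"
  show "nonsingular_pair_within M E1 F2 C"
  proof (rule ac_imp_nsp[OF P E1 s2 C], intro ballI impI)
    fix T assume T: "T \<in> sets (E1 \<Otimes>\<^sub>M F2)" and T0: "emeasure (M \<Otimes>\<^sub>M M) T = 0"
    obtain S where S: "S \<in> sets (F1 \<Otimes>\<^sub>M F2)" and eq: "T \<inter> (C \<times> C) = S \<inter> (C \<times> C)"
      using trace_lemma[OF P s1 s2 E1 C tr T] by blast
    have TQ: "T \<in> sets (M \<Otimes>\<^sub>M M)" using sets_sub[OF P E1 s2] T by blast
    have "emeasure (M \<Otimes>\<^sub>M M) (S \<inter> (C \<times> C)) = emeasure (M \<Otimes>\<^sub>M M) (T \<inter> (C \<times> C))" using eq by simp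
    also have "\<dots> \<le> emeasure (M \<Otimes>\<^sub>M M) T" by (rule emeasure_mono) (use TQ in auto)
    finally have S0: "emeasure (M \<Otimes>\<^sub>M M) (S \<inter> (C \<times> C)) = 0" using T0 by simp
    have seq: "{w \<in> space M. (w, w) \<in> T} \<inter> C = {w \<in> space M. (w, w) \<in> S} \<inter> C"
    proof -
      have "(w, w) \<in> T \<longleftrightarrow> (w, w) \<in> S" if w: "w \<in> C" for w
      proof -
        have "(w, w) \<in> T \<inter> (C \<times> C) \<longleftrightarrow> (w, w) \<in> S \<inter> (C \<times> C)" using eq by simp
        then show ?thesis using w by simp
      qed
      then show ?thesis by auto
    qed
    have "emeasure (nuC M E1 F2 C) T = emeasure (nuC M F1 F2 C) S"
      using nuC_emeasure[OF P E1 s2 C T] nuC_emeasure[OF P s1 s2 C S] seq by simp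
    also have "\<dots> = 0" by (rule support_lemma[OF P s1 s2 C N S S0])
    finally show "emeasure (nuC M E1 F2 C) T = 0" .
  qed
qed

end
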